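(* Let $A=\{A_i\}_{i=1}^\mathsf{p}\subset\mathcal{B}(\mathbb{C}^D)$ be the tensor of an injective MPS in canonical form, with transfer matrix $E=\sum_i\overline{A_i}\otimes A_i=|I\rangle\rangle\langle\langle\Lambda|+\tilde E$. Let $X,Y\in \mathcal{B}(\mathbb{C}^D)$ be such that the states $|\Psi_X\rangle=|\Psi(A,X,n)\rangle$ and $|\Psi_Y\rangle=|\Psi(A,Y,n)\rangle$ are normalized and orthogonal, and assume $n$ is sufficiently large compared to $D$. Then (i) $\|X\|_F=O(1)$ (and likewise $\|Y\|_F=O(1)$); (ii) $|\langle\langle\Lambda|(\overline{X}\otimes Y)|I\rangle\rangle|= O(\lambda_2^{n/2})$ and $|\langle\langle\Lambda|(\overline{Y}\otimes X)|I\rangle\rangle|= O(\lambda_2^{n/2})$, where the $O$-notation refers to $n\to\infty$.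
   Context: MPS: $|\Psi(A,X,n)\rangle=\sum_{i_1,\dots,i_n}\mathrm{tr}(A_{i_1}\cdots A_{i_n}X)|i_1\cdots i_n\rangle$. Vectorization: for $X=\sum_{\alpha,\beta}X_{\alpha\beta}|\alpha\rangle\langle\beta|$ set $|X\rangle\rangle=\sum_{\alpha,\beta}X_{\alpha\beta}|\beta\rangle\otimes|\alpha\rangle\in\mathbb{C}^D\otimes\mathbb{C}^D$, so $E|X\rangle\rangle=|\mathcal{E}(X)\rangle\rangle$ with $\mathcal{E}(X)=\sum_iA_iXA_i^\dagger$. Injective: $\mathcal{E}$ has spectral radius $1$ and is primitive (its fixed point is positive definite and $1$ is its only eigenvalue on the unit circle, with multiplicity one). Canonical form: the unique fixed point of $\mathcal{E}$ is the identity $I$, and the unique fixed point of $\mathcal{E}^\dagger(Y)=\sum_iA_i^\dagger YA_i$ is a positive definite diagonal matrix $\Lambda$ with $\mathrm{tr}\Lambda=1$; then $E=|I\rangle\rangle\langle\langle\Lambda|\oplus\tilde E$ is the Jordan decomposition, with $\tilde E$ collecting the Jordan blocks of eigenvalues of modulus $<1$. $\lambda_2<1$ denotes the largest modulus of an eigenvalue of $E$ other than the eigenvalue $1$. *)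

theory Defs
  imports "Jordan_Normal_Form.Spectral_Radius"
begin

definition mconj :: "complex mat \<Rightarrow> complex mat" where
  "mconj X = mat (dim_row X) (dim_col X) (\<lambda>(i,j). cnj (X $$ (i,j)))"

text \<open>Kronecker product; the basis vector |b> \<otimes> |a> of C^D \<otimes> C^D has index b * D + a.\<close>
definition kron :: "complex mat \<Rightarrow> complex mat \<Rightarrow> complex mat" where
  "kron P Q = mat (dim_row P * dim_row Q) (dim_col P * dim_col Q)
     (\<lambda>(r,c). P $$ (r div dim_row Q, c div dim_col Q) * Q $$ (r mod dim_row Q, c mod dim_col Q))"

text \<open>Vectorization |X>> = sum X_ab |b> \<otimes> |a> of a D x D matrix.\<close>
definition vectorize :: "complex mat \<Rightarrow> complex vec" where
  "vectorize X = vec (dim_row X * dim_row X) (\<lambda>k. X $$ (k mod dim_row X, k div dim_row X))"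

definition braket :: "complex vec \<Rightarrow> complex vec \<Rightarrow> complex" where
  "braket u v = (\<Sum>k<dim_vec u. cnj (u $ k) * v $ k)"

definition transfer_matrix :: "nat \<Rightarrow> nat \<Rightarrow> (nat \<Rightarrow> complex mat) \<Rightarrow> complex mat" where
  "transfer_matrix D p A = mat (D*D) (D*D) (\<lambda>rc. \<Sum>i<p. kron (mconj (A i)) (A i) $$ rc)"

definition cp_map :: "nat \<Rightarrow> nat \<Rightarrow> (nat \<Rightarrow> complex mat) \<Rightarrow> complex mat \<Rightarrow> complex mat" where
  "cp_map D p A X = mat D D (\<lambda>rc. \<Sum>i<p. (A i * X * mat_adjoint (A i)) $$ rc)"

definition cp_dual :: "nat \<Rightarrow> nat \<Rightarrow> (nat \<Rightarrow> complex mat) \<Rightarrow> complex mat \<Rightarrow> complex mat" where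
  "cp_dual D p A Y = mat D D (\<lambda>rc. \<Sum>i<p. (mat_adjoint (A i) * Y * A i) $$ rc)"

definition mtrace :: "complex mat \<Rightarrow> complex" where
  "mtrace X = (\<Sum>i<dim_row X. X $$ (i,i))"

definition pos_def_mat :: "nat \<Rightarrow> complex mat \<Rightarrow> bool" where
  "pos_def_mat D P \<longleftrightarrow> P \<in> carrier_mat D D \<and> mat_adjoint P = P \<and>
     (\<forall>v \<in> carrier_vec D. v \<noteq> 0\<^sub>v D \<longrightarrow> Re (braket v (P *\<^sub>v v)) > 0)"

text \<open>Injective MPS: the transfer map has spectral radius 1 and is primitive
  (positive definite fixed point, 1 the only eigenvalue on the unit circle, with
  (algebraic) multiplicity one).\<close>
definition injective_mps :: "nat \<Rightarrow> nat \<Rightarrow> (nat \<Rightarrow> complex mat) \<Rightarrow> bool" where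
  "injective_mps D p A \<longleftrightarrow>
     (let E = transfer_matrix D p A in
       spectral_radius E = 1 \<and>
       (\<exists>P. pos_def_mat D P \<and> cp_map D p A P = P) \<and>
       (\<forall>\<mu>. eigenvalue E \<mu> \<and> cmod \<mu> = 1 \<longrightarrow> \<mu> = 1) \<and>
       order 1 (char_poly E) = 1)"

text \<open>Canonical form: the fixed point of E is the identity (unique up to scaling by the
  multiplicity-one condition), and Lam is a positive definite diagonal fixed point of
  E^dagger with trace 1.\<close>
definition canonical_form :: "nat \<Rightarrow> nat \<Rightarrow> (nat \<Rightarrow> complex mat) \<Rightarrow> complex mat \<Rightarrow> bool" where
  "canonical_form D p A Lam \<longleftrightarrow>
     cp_map D p A (1\<^sub>m D) = 1\<^sub>m D \<and>
     Lam \<in> carrier_mat D D \<and> diagonal_mat Lam \<and> pos_def_mat D Lam \<and> mtrace Lam = 1 \<and>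
     cp_dual D p A Lam = Lam"

definition lambda2 :: "complex mat \<Rightarrow> real" where
  "lambda2 E = Sup (insert 0 (cmod ` {\<mu>. eigenvalue E \<mu> \<and> \<mu> \<noteq> 1}))"

text \<open>Coefficient tr(A_{i1} ... A_{in} X) of |i1 ... in> in |Psi(A,X,n)>.\<close>
definition mps_coeff :: "(nat \<Rightarrow> complex mat) \<Rightarrow> complex mat \<Rightarrow> nat list \<Rightarrow> complex" where
  "mps_coeff A X w = mtrace (foldr (\<lambda>i M. A i * M) w X)"

definition words :: "nat \<Rightarrow> nat \<Rightarrow> nat list set" where
  "words p n = {w. length w = n \<and> set w \<subseteq> {..<p}}"

definition mps_inner :: "nat \<Rightarrow> (nat \<Rightarrow> complex mat) \<Rightarrow> nat \<Rightarrow> complex mat \<Rightarrow> complex mat \<Rightarrow> complex" where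
  "mps_inner p A n X Y = (\<Sum>w\<in>words p n. cnj (mps_coeff A X w) * mps_coeff A Y w)"

definition frob_norm :: "complex mat \<Rightarrow> real" where
  "frob_norm X = sqrt (\<Sum>i<dim_row X. \<Sum>j<dim_col X. (cmod (X $$ (i,j)))\<^sup>2)"

end

theory Submission
  imports Defs "Jordan_Normal_Form.Jordan_Normal_Form_Uniqueness"
begin


lemma sum_split: fixes g :: "nat \<Rightarrow> 'a::comm_monoid_add"
  shows "(\<Sum>k<D*D. g k) = (\<Sum>e<D. \<Sum>f<D. g (e*D+f))"
proof -
  have "(\<Sum>k<D*D. g k) = (\<Sum>e<D. sum g {e*D..<e*D+D})"
    by (rule sum.nat_group[symmetric])
  also have "\<dots> = (\<Sum>e<D. \<Sum>f<D. g (e*D+f))"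
  proof (rule sum.cong[OF refl])
    fix e show "sum g {e*D..<e*D+D} = (\<Sum>f<D. g (e*D+f))"
    proof -
      have "sum g {0+e*D..<D+e*D} = (\<Sum>f=0..<D. g (f+e*D))" by (rule sum.shift_bounds_nat_ivl)
      then show ?thesis by (simp add: lessThan_atLeast0 add.commute)
    qed
  qed
  finally show ?thesis .
qed

lemma divmod_lt: fixes r D :: nat assumes "r < D*D" shows "r div D < D" "r mod D < D" "D > 0"
proof -
  show "D > 0" using assms by (cases "D = 0") auto
  then show "r mod D < D" by simp
  show "r div D < D" using assms by (simp add: less_mult_imp_div_less)
qed

lemma E_carrier: "transfer_matrix D p A \<in> carrier_mat (D*D) (D*D)"
  unfolding transfer_matrix_def by simp

lemma E_entry: assumes A: "\<forall>i<p. A i \<in> carrier_mat D D" and r: "r < D*D" and c: "c < D*D"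
  shows "transfer_matrix D p A $$ (r,c) = (\<Sum>i<p. cnj (A i $$ (r div D, c div D)) * A i $$ (r mod D, c mod D))"
proof -
  note rr = divmod_lt[OF r] and cc = divmod_lt[OF c]
  have "transfer_matrix D p A $$ (r,c) = (\<Sum>i<p. kron (mconj (A i)) (A i) $$ (r,c))"
    unfolding transfer_matrix_def using r c by simp
  also have "\<dots> = (\<Sum>i<p. cnj (A i $$ (r div D, c div D)) * A i $$ (r mod D, c mod D))"
  proof (rule sum.cong[OF refl])
    fix i assume "i \<in> {..<p}" then have Ai: "A i \<in> carrier_mat D D" using A by auto
    show "kron (mconj (A i)) (A i) $$ (r,c) = cnj (A i $$ (r div D, c div D)) * A i $$ (r mod D, c mod D)"
      unfolding kron_def mconj_def using Ai r c rr cc by simp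
  qed
  finally show ?thesis .
qed

lemma vec_entry: assumes "X \<in> carrier_mat D D" "k < D*D"
  shows "vectorize X $ k = X $$ (k mod D, k div D)" "dim_vec (vectorize X) = D*D"
  using assms unfolding vectorize_def by auto

lemma adj_entry: "i < dim_col A \<Longrightarrow> j < dim_row A \<Longrightarrow> mat_adjoint (A::complex mat) $$ (i,j) = cnj (A $$ (j,i))"
  unfolding mat_adjoint_def by (simp add: mat_of_rows_def)

lemma mult_entry: assumes "A \<in> carrier_mat D D" "X \<in> carrier_mat D D" "a < D" "b < D"
  shows "(A * X) $$ (a,b) = (\<Sum>f<D. A $$ (a,f) * X $$ (f,b))"
  using assms by (simp add: index_mult_mat scalar_prod_def lessThan_atLeast0)

lemma prod3_entry: assumes "A \<in> carrier_mat D D" "X \<in> carrier_mat D D" "B \<in> carrier_mat D D" "a < D" "b < D"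
  shows "(A * X * B) $$ (a,b) = (\<Sum>e<D. \<Sum>f<D. A $$ (a,f) * X $$ (f,e) * B $$ (e,b))"
proof -
  have AX: "A * X \<in> carrier_mat D D" using assms by simp
  have "(A * X * B) $$ (a,b) = (\<Sum>e<D. (A*X) $$ (a,e) * B $$ (e,b))"
    by (rule mult_entry[OF AX assms(3-5)])
  also have "\<dots> = (\<Sum>e<D. \<Sum>f<D. A $$ (a,f) * X $$ (f,e) * B $$ (e,b))"
  proof (rule sum.cong[OF refl])
    fix e assume "e \<in> {..<D}"
    then have "(A*X) $$ (a,e) = (\<Sum>f<D. A $$ (a,f) * X $$ (f,e))" using assms by (intro mult_entry) auto
    then show "(A*X) $$ (a,e) * B $$ (e,b) = (\<Sum>f<D. A $$ (a,f) * X $$ (f,e) * B $$ (e,b))"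
      by (simp add: sum_distrib_right)
  qed
  finally show ?thesis .
qed

lemma adj_carrier: "A \<in> carrier_mat D D \<Longrightarrow> mat_adjoint (A::complex mat) \<in> carrier_mat D D"
  unfolding mat_adjoint_def by auto

lemma cp_map_entry: assumes A: "\<forall>i<p. A i \<in> carrier_mat D D" and X: "X \<in> carrier_mat D D"
  and a: "a < D" and b: "b < D"
  shows "cp_map D p A X $$ (a,b) = (\<Sum>i<p. \<Sum>e<D. \<Sum>f<D. A i $$ (a,f) * X $$ (f,e) * cnj (A i $$ (b,e)))"
  unfolding cp_map_def using a b
  apply simp
  apply (rule sum.cong[OF refl])
  using A X a b by (auto simp: prod3_entry adj_carrier adj_entry intro!: sum.cong)

lemma cp_dual_entry: assumes A: "\<forall>i<p. A i \<in> carrier_mat D D" and X: "X \<in> carrier_mat D D"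
  and a: "a < D" and b: "b < D"
  shows "cp_dual D p A X $$ (a,b) = (\<Sum>i<p. \<Sum>e<D. \<Sum>f<D. cnj (A i $$ (f,a)) * X $$ (f,e) * A i $$ (e,b))"
  unfolding cp_dual_def using a b
  apply simp
  apply (rule sum.cong[OF refl])
proof -
  fix i assume "i \<in> {..<p}"
  then have Ai: "A i \<in> carrier_mat D D" using A by auto
  show "(mat_adjoint (A i) * X * A i) $$ (a, b) = (\<Sum>e<D. \<Sum>f<D. cnj (A i $$ (f,a)) * X $$ (f,e) * A i $$ (e,b))"
    using prod3_entry[OF adj_carrier[OF Ai] X Ai a b] Ai a by (auto simp: adj_entry intro!: sum.cong)
qed


lemma swap3: "(\<Sum>e\<in>E. \<Sum>f\<in>F. \<Sum>i\<in>I. g i e f) = (\<Sum>i\<in>I. \<Sum>e\<in>E. \<Sum>f\<in>F. (g i e f :: 'a::comm_monoid_add))"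
proof -
  have "(\<Sum>e\<in>E. \<Sum>f\<in>F. \<Sum>i\<in>I. g i e f) = (\<Sum>e\<in>E. \<Sum>i\<in>I. \<Sum>f\<in>F. g i e f)"
    by (rule sum.cong[OF refl], rule sum.swap)
  also have "\<dots> = (\<Sum>i\<in>I. \<Sum>e\<in>E. \<Sum>f\<in>F. g i e f)" by (rule sum.swap)
  finally show ?thesis .
qed

lemma divmod_simps: fixes e f D :: nat assumes "f < D" shows "(e*D+f) div D = e" "(e*D+f) mod D = f"
  using assms by auto

lemma lt_DD: fixes e f D :: nat assumes "e < D" "f < D" shows "e*D+f < D*D"
proof -
  have "e*D+f < e*D + D" using assms by simp
  also have "\<dots> = (e+1)*D" by simp
  also have "\<dots> \<le> D*D" using assms by (intro mult_right_mono) auto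
  finally show ?thesis .
qed

lemma Evec: assumes A: "\<forall>i<p. A i \<in> carrier_mat D D" and X: "X \<in> carrier_mat D D"
  shows "transfer_matrix D p A *\<^sub>v vectorize X = vectorize (cp_map D p A X)"
proof (rule eq_vecI)
  have cX: "cp_map D p A X \<in> carrier_mat D D" unfolding cp_map_def by simp
  show "dim_vec (transfer_matrix D p A *\<^sub>v vectorize X) = dim_vec (vectorize (cp_map D p A X))"
    using X cX by (simp add: vectorize_def transfer_matrix_def)
  fix r assume "r < dim_vec (vectorize (cp_map D p A X))"
  then have r: "r < D*D" using cX by (simp add: vectorize_def)
  note rr = divmod_lt[OF r]
  have "(transfer_matrix D p A *\<^sub>v vectorize X) $ r = (\<Sum>k<D*D. transfer_matrix D p A $$ (r,k) * vectorize X $ k)"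
    using r X by (simp add: transfer_matrix_def vectorize_def scalar_prod_def lessThan_atLeast0)
  also have "\<dots> = (\<Sum>e<D. \<Sum>f<D. transfer_matrix D p A $$ (r,e*D+f) * vectorize X $ (e*D+f))"
    by (rule sum_split)
  also have "\<dots> = (\<Sum>e<D. \<Sum>f<D. \<Sum>i<p. A i $$ (r mod D, f) * X $$ (f,e) * cnj (A i $$ (r div D, e)))"
    using r X by (auto intro!: sum.cong simp: E_entry[OF A] vec_entry lt_DD divmod_simps sum_distrib_right sum_distrib_left mult_ac)
  also have "\<dots> = (\<Sum>i<p. \<Sum>e<D. \<Sum>f<D. A i $$ (r mod D, f) * X $$ (f,e) * cnj (A i $$ (r div D, e)))"
    by (rule swap3)
  also have "\<dots> = vectorize (cp_map D p A X) $ r"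
    using r rr cX by (simp add: vec_entry cp_map_entry[OF A X])
  finally show "(transfer_matrix D p A *\<^sub>v vectorize X) $ r = vectorize (cp_map D p A X) $ r" .
qed

lemma Erow: assumes A: "\<forall>i<p. A i \<in> carrier_mat D D" and Y: "Y \<in> carrier_mat D D" and c: "c < D*D"
  shows "(\<Sum>r<D*D. cnj (vectorize Y $ r) * transfer_matrix D p A $$ (r,c)) = cnj (vectorize (cp_dual D p A Y) $ c)"
proof -
  note cc = divmod_lt[OF c]
  have cY: "cp_dual D p A Y \<in> carrier_mat D D" unfolding cp_dual_def by simp
  have "(\<Sum>r<D*D. cnj (vectorize Y $ r) * transfer_matrix D p A $$ (r,c))
     = (\<Sum>e<D. \<Sum>f<D. cnj (vectorize Y $ (e*D+f)) * transfer_matrix D p A $$ (e*D+f,c))"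
    by (rule sum_split)
  also have "\<dots> = (\<Sum>e<D. \<Sum>f<D. \<Sum>i<p. A i $$ (f, c mod D) * cnj (Y $$ (f,e)) * cnj (A i $$ (e, c div D)))"
    using c Y by (auto intro!: sum.cong simp: E_entry[OF A] vec_entry lt_DD divmod_simps sum_distrib_left mult_ac)
  also have "\<dots> = (\<Sum>i<p. \<Sum>e<D. \<Sum>f<D. A i $$ (f, c mod D) * cnj (Y $$ (f,e)) * cnj (A i $$ (e, c div D)))"
    by (rule swap3)
  also have "\<dots> = cnj (vectorize (cp_dual D p A Y) $ c)"
    using c cc cY by (simp add: vec_entry cp_dual_entry[OF A Y])
  finally show ?thesis .
qed

lemma trace_pair: assumes L: "L \<in> carrier_mat D D"
  shows "(\<Sum>k<D*D. cnj (vectorize L $ k) * vectorize (1\<^sub>m D) $ k) = cnj (mtrace L)"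
proof -
  have "(\<Sum>k<D*D. cnj (vectorize L $ k) * vectorize (1\<^sub>m D) $ k)
      = (\<Sum>e<D. \<Sum>f<D. cnj (vectorize L $ (e*D+f)) * vectorize (1\<^sub>m D) $ (e*D+f))"
    by (rule sum_split)
  also have "\<dots> = (\<Sum>e<D. \<Sum>f<D. if f = e then cnj (L $$ (e,e)) else 0)"
    using L by (auto intro!: sum.cong simp: vec_entry[OF one_carrier_mat] vec_entry[OF L] lt_DD divmod_simps if_distrib[of "(*) _"] cong: if_cong)
  also have "\<dots> = (\<Sum>e<D. cnj (L $$ (e,e)))" by simp
  also have "\<dots> = cnj (mtrace L)" using L by (simp add: mtrace_def)
  finally show ?thesis .
qed


definition projP :: "nat \<Rightarrow> complex mat \<Rightarrow> complex mat" where
  "projP D L = mat (D*D) (D*D) (\<lambda>(r,c). vectorize (1\<^sub>m D) $ r * cnj (vectorize L $ c))"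

lemma P_carrier: "projP D L \<in> carrier_mat (D*D) (D*D)" unfolding projP_def by simp

lemma P_entry: "r < D*D \<Longrightarrow> c < D*D \<Longrightarrow> projP D L $$ (r,c) = vectorize (1\<^sub>m D) $ r * cnj (vectorize L $ c)"
  unfolding projP_def by simp

lemma dim_vectorize[simp]: "dim_vec (vectorize X) = dim_row X * dim_row X"
  unfolding vectorize_def by simp

lemma mat_vec_entry: assumes "M \<in> carrier_mat n n" "dim_vec v = n" "r < n"
  shows "(M *\<^sub>v v) $ r = (\<Sum>k<n. M $$ (r,k) * v $ k)"
  using assms by (simp add: scalar_prod_def lessThan_atLeast0)

lemma EP: assumes A: "\<forall>i<p. A i \<in> carrier_mat D D" and fix1: "cp_map D p A (1\<^sub>m D) = 1\<^sub>m D"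
  shows "transfer_matrix D p A * projP D L = projP D L"
proof (rule eq_matI)
  let ?E = "transfer_matrix D p A"
  have Ev: "?E *\<^sub>v vectorize (1\<^sub>m D) = vectorize (1\<^sub>m D)" using Evec[OF A one_carrier_mat] fix1 by simp
  fix r c assume r: "r < dim_row (projP D L)" and c: "c < dim_col (projP D L)"
  then have r: "r < D*D" and c: "c < D*D" by (auto simp: projP_def)
  have "(?E * projP D L) $$ (r,c) = (\<Sum>k<D*D. ?E $$ (r,k) * projP D L $$ (k,c))"
    by (rule mult_entry[OF E_carrier P_carrier r c])
  also have "\<dots> = (\<Sum>k<D*D. ?E $$ (r,k) * (vectorize (1\<^sub>m D) $ k * cnj (vectorize L $ c)))"
    using c by (simp add: P_entry)
  also have "\<dots> = (?E *\<^sub>v vectorize (1\<^sub>m D)) $ r * cnj (vectorize L $ c)"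
    using r by (simp add: mat_vec_entry[OF E_carrier] sum_distrib_left mult_ac)
  also have "\<dots> = projP D L $$ (r,c)" using r c Ev by (simp add: projP_def)
  finally show "(?E * projP D L) $$ (r,c) = projP D L $$ (r,c)" .
qed (auto simp: projP_def transfer_matrix_def)

lemma PE: assumes A: "\<forall>i<p. A i \<in> carrier_mat D D" and L: "L \<in> carrier_mat D D"
  and fixL: "cp_dual D p A L = L"
  shows "projP D L * transfer_matrix D p A = projP D L"
proof (rule eq_matI)
  let ?E = "transfer_matrix D p A"
  fix r c assume r: "r < dim_row (projP D L)" and c: "c < dim_col (projP D L)"
  then have r: "r < D*D" and c: "c < D*D" by (auto simp: projP_def)
  have "(projP D L * ?E) $$ (r,c) = (\<Sum>k<D*D. projP D L $$ (r,k) * ?E $$ (k,c))"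
    by (rule mult_entry[OF P_carrier E_carrier r c])
  also have "\<dots> = (\<Sum>k<D*D. (vectorize (1\<^sub>m D) $ r * cnj (vectorize L $ k)) * ?E $$ (k,c))"
    using r by (simp add: P_entry)
  also have "\<dots> = vectorize (1\<^sub>m D) $ r * (\<Sum>k<D*D. cnj (vectorize L $ k) * ?E $$ (k,c))"
    by (simp add: sum_distrib_left mult_ac)
  also have "\<dots> = projP D L $$ (r,c)" using r c Erow[OF A L c] fixL by (simp add: projP_def)
  finally show "(projP D L * ?E) $$ (r,c) = projP D L $$ (r,c)" .
qed (auto simp: projP_def transfer_matrix_def)

lemma PP: assumes L: "L \<in> carrier_mat D D" and tr: "mtrace L = 1"
  shows "projP D L * projP D L = projP D L"
proof (rule eq_matI)
  fix r c assume r: "r < dim_row (projP D L)" and c: "c < dim_col (projP D L)"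
  then have r: "r < D*D" and c: "c < D*D" by (auto simp: projP_def)
  have "(projP D L * projP D L) $$ (r,c) = (\<Sum>k<D*D. projP D L $$ (r,k) * projP D L $$ (k,c))"
    by (rule mult_entry[OF P_carrier P_carrier r c])
  also have "\<dots> = (\<Sum>k<D*D. (vectorize (1\<^sub>m D) $ r * cnj (vectorize L $ k)) * (vectorize (1\<^sub>m D) $ k * cnj (vectorize L $ c)))"
    using r c by (simp add: P_entry)
  also have "\<dots> = vectorize (1\<^sub>m D) $ r * cnj (vectorize L $ c) * (\<Sum>k<D*D. cnj (vectorize L $ k) * vectorize (1\<^sub>m D) $ k)"
    by (simp add: sum_distrib_left mult_ac)
  also have "\<dots> = projP D L $$ (r,c)" using r c trace_pair[OF L] tr by (simp add: projP_def)
  finally show "(projP D L * projP D L) $$ (r,c) = projP D L $$ (r,c)" .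
qed (auto simp: projP_def)

lemma EnP: fixes E P :: "complex mat" assumes EC: "E \<in> carrier_mat m m" and PC: "P \<in> carrier_mat m m" and EP: "E * P = P"
  shows "E ^\<^sub>m n * P = P"
proof (induct n)
  case 0 then show ?case using PC EC by simp
next
  case (Suc n)
  have "E ^\<^sub>m Suc n * P = E ^\<^sub>m n * (E * P)" using EC PC by (simp add: assoc_mult_mat[of _ m m])
  then show ?case using Suc EP by simp
qed

lemma Fpow: fixes E P :: "complex mat" assumes EC: "E \<in> carrier_mat m m" and PC: "P \<in> carrier_mat m m"
  and EP: "E * P = P" and PE: "P * E = P" and PP: "P * P = P" and n: "n \<ge> 1"
  shows "(E - P) ^\<^sub>m n = E ^\<^sub>m n - P"
  using n
proof (induct n)
  case 0 then show ?case by simp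
next
  case (Suc n)
  have En: "E ^\<^sub>m n \<in> carrier_mat m m" using EC by simp
  show ?case
  proof (cases "n = 0")
    case True then show ?thesis using EC PC by simp
  next
    case False
    then have IH: "(E - P) ^\<^sub>m n = E ^\<^sub>m n - P" using Suc by simp
    have "(E - P) ^\<^sub>m Suc n = (E ^\<^sub>m n - P) * (E - P)" using IH by simp
    also have "\<dots> = (E ^\<^sub>m n - P) * E - (E ^\<^sub>m n - P) * P"
      by (rule mult_minus_distrib_mat[of _ m m], insert En PC EC, auto)
    also have "(E ^\<^sub>m n - P) * E = E ^\<^sub>m n * E - P * E"
      by (rule minus_mult_distrib_mat[of _ m m], insert En PC EC, auto)
    also have "(E ^\<^sub>m n - P) * P = E ^\<^sub>m n * P - P * P"
      by (rule minus_mult_distrib_mat[of _ m m], insert En PC EC, auto)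
    also have "E ^\<^sub>m n * P = P" by (rule EnP[OF EC PC EP])
    finally have "(E - P) ^\<^sub>m Suc n = (E ^\<^sub>m Suc n - P) - (P - P)" using PE PP by simp
    also have "\<dots> = E ^\<^sub>m Suc n - P" using EC PC by (intro eq_matI) auto
    finally show ?thesis .
  qed
qed


definition gxy :: "nat \<Rightarrow> complex mat \<Rightarrow> complex mat \<Rightarrow> nat \<Rightarrow> nat \<Rightarrow> complex" where
  "gxy D X Y r s = cnj (X $$ (s div D, r div D)) * Y $$ (s mod D, r mod D)"

definition Bf :: "nat \<Rightarrow> complex mat \<Rightarrow> complex mat \<Rightarrow> complex mat \<Rightarrow> complex" where
  "Bf D M X Y = (\<Sum>r<D*D. \<Sum>s<D*D. M $$ (r,s) * gxy D X Y r s)"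

lemma words_Suc: "words p (Suc n) = (\<lambda>(w,i). w @ [i]) ` (words p n \<times> {..<p})"
proof
  show "(\<lambda>(w,i). w @ [i]) ` (words p n \<times> {..<p}) \<subseteq> words p (Suc n)"
    by (auto simp: words_def)
  show "words p (Suc n) \<subseteq> (\<lambda>(w,i). w @ [i]) ` (words p n \<times> {..<p})"
  proof
    fix w assume w: "w \<in> words p (Suc n)"
    then have "w \<noteq> []" by (auto simp: words_def)
    then have eq: "w = butlast w @ [last w]" by simp
    have "butlast w \<in> words p n" using w by (auto simp: words_def dest: in_set_butlastD)
    moreover have "last w \<in> set w" using \<open>w \<noteq> []\<close> by simp
    then have "last w < p" using w by (auto simp: words_def)
    ultimately show "w \<in> (\<lambda>(w,i). w @ [i]) ` (words p n \<times> {..<p})"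
      using eq by (intro image_eqI[of _ _ "(butlast w, last w)"]) auto
  qed
qed

lemma words_0: "words p 0 = {[]}" by (auto simp: words_def)

lemma inner_Suc: "mps_inner p A (Suc n) X Y = (\<Sum>i<p. mps_inner p A n (A i * X) (A i * Y))"
proof -
  have inj: "inj_on (\<lambda>(w,i). w @ [i]) (words p n \<times> {..<p})"
    by (auto simp: inj_on_def)
  have "mps_inner p A (Suc n) X Y = (\<Sum>(w,i)\<in>words p n \<times> {..<p}. cnj (mps_coeff A X (w@[i])) * mps_coeff A Y (w@[i]))"
    unfolding mps_inner_def words_Suc by (subst sum.reindex[OF inj]) (simp add: case_prod_beta)
  also have "\<dots> = (\<Sum>w\<in>words p n. \<Sum>i<p. cnj (mps_coeff A (A i * X) w) * mps_coeff A (A i * Y) w)"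
    by (subst sum.cartesian_product[symmetric]) (simp add: mps_coeff_def)
  also have "\<dots> = (\<Sum>i<p. mps_inner p A n (A i * X) (A i * Y))"
    unfolding mps_inner_def by (rule sum.swap)
  finally show ?thesis .
qed

lemma Bf_one: assumes X: "X \<in> carrier_mat D D" and Y: "Y \<in> carrier_mat D D"
  shows "Bf D (1\<^sub>m (D*D)) X Y = cnj (mtrace X) * mtrace Y"
proof -
  have "Bf D (1\<^sub>m (D*D)) X Y = (\<Sum>r<D*D. gxy D X Y r r)"
    unfolding Bf_def by (auto intro!: sum.cong simp: if_distrib[of "\<lambda>x. x * _"] cong: if_cong)
  also have "\<dots> = (\<Sum>e<D. \<Sum>f<D. gxy D X Y (e*D+f) (e*D+f))" by (rule sum_split)
  also have "\<dots> = (\<Sum>e<D. \<Sum>f<D. cnj (X $$ (e,e)) * Y $$ (f,f))"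
    by (auto intro!: sum.cong simp: gxy_def divmod_simps)
  also have "\<dots> = cnj (mtrace X) * mtrace Y"
    using X Y by (simp add: mtrace_def cnj_sum sum_product)
  finally show ?thesis .
qed

lemma inner_identity: assumes A: "\<forall>i<p. A i \<in> carrier_mat D D" and X: "X \<in> carrier_mat D D"
  and Y: "Y \<in> carrier_mat D D" and r: "r < D*D" and k: "k < D*D"
  shows "(\<Sum>s<D*D. transfer_matrix D p A $$ (k,s) * gxy D X Y r s) = (\<Sum>i<p. gxy D (A i * X) (A i * Y) r k)"
proof -
  note rr = divmod_lt[OF r] and kk = divmod_lt[OF k]
  have "(\<Sum>s<D*D. transfer_matrix D p A $$ (k,s) * gxy D X Y r s)
     = (\<Sum>d<D. \<Sum>c<D. transfer_matrix D p A $$ (k,d*D+c) * gxy D X Y r (d*D+c))"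
    by (rule sum_split)
  also have "\<dots> = (\<Sum>d<D. \<Sum>c<D. \<Sum>i<p. (cnj (A i $$ (k div D, d)) * cnj (X $$ (d, r div D))) * (A i $$ (k mod D, c) * Y $$ (c, r mod D)))"
    using k by (auto intro!: sum.cong simp: E_entry[OF A] lt_DD divmod_simps gxy_def sum_distrib_right sum_distrib_left mult_ac)
  also have "\<dots> = (\<Sum>i<p. \<Sum>d<D. \<Sum>c<D. (cnj (A i $$ (k div D, d)) * cnj (X $$ (d, r div D))) * (A i $$ (k mod D, c) * Y $$ (c, r mod D)))"
    by (rule swap3)
  also have "\<dots> = (\<Sum>i<p. gxy D (A i * X) (A i * Y) r k)"
  proof (rule sum.cong[OF refl])
    fix i assume "i \<in> {..<p}" then have Ai: "A i \<in> carrier_mat D D" using A by auto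
    show "(\<Sum>d<D. \<Sum>c<D. (cnj (A i $$ (k div D, d)) * cnj (X $$ (d, r div D))) * (A i $$ (k mod D, c) * Y $$ (c, r mod D)))
      = gxy D (A i * X) (A i * Y) r k"
      unfolding gxy_def mult_entry[OF Ai X kk(1) rr(1)] mult_entry[OF Ai Y kk(2) rr(2)]
      by (simp add: cnj_sum sum_product mult_ac) (rule sum.swap)
  qed
  finally show ?thesis .
qed

lemma sum_swap_mult: "(\<Sum>s\<in>S. (\<Sum>k\<in>K. m k * e k s) * g s) = (\<Sum>k\<in>K. m k * (\<Sum>s\<in>S. e k s * (g s::complex)))"
proof -
  have "(\<Sum>s\<in>S. (\<Sum>k\<in>K. m k * e k s) * g s) = (\<Sum>s\<in>S. \<Sum>k\<in>K. m k * (e k s * g s))"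
    by (simp add: sum_distrib_right mult.assoc)
  also have "\<dots> = (\<Sum>k\<in>K. \<Sum>s\<in>S. m k * (e k s * g s))" by (rule sum.swap)
  also have "\<dots> = (\<Sum>k\<in>K. m k * (\<Sum>s\<in>S. e k s * g s))" by (simp add: sum_distrib_left)
  finally show ?thesis .
qed

lemma Bf_step: assumes A: "\<forall>i<p. A i \<in> carrier_mat D D" and X: "X \<in> carrier_mat D D"
  and Y: "Y \<in> carrier_mat D D" and M: "M \<in> carrier_mat (D*D) (D*D)"
  shows "Bf D (M * transfer_matrix D p A) X Y = (\<Sum>i<p. Bf D M (A i * X) (A i * Y))"
proof -
  let ?E = "transfer_matrix D p A"
  have "Bf D (M * ?E) X Y = (\<Sum>r<D*D. \<Sum>s<D*D. (\<Sum>k<D*D. M $$ (r,k) * ?E $$ (k,s)) * gxy D X Y r s)"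
    unfolding Bf_def by (intro sum.cong refl) (simp add: mult_entry[OF M E_carrier])
  also have "\<dots> = (\<Sum>r<D*D. \<Sum>k<D*D. M $$ (r,k) * (\<Sum>s<D*D. ?E $$ (k,s) * gxy D X Y r s))"
    by (intro sum.cong refl sum_swap_mult)
  also have "\<dots> = (\<Sum>r<D*D. \<Sum>k<D*D. \<Sum>i<p. M $$ (r,k) * gxy D (A i * X) (A i * Y) r k)"
    by (intro sum.cong refl) (simp add: inner_identity[OF A X Y] sum_distrib_left)
  also have "\<dots> = (\<Sum>i<p. Bf D M (A i * X) (A i * Y))"
    unfolding Bf_def by (rule swap3)
  finally show ?thesis .
qed

lemma inner_Bf: assumes A: "\<forall>i<p. A i \<in> carrier_mat D D"
  shows "X \<in> carrier_mat D D \<Longrightarrow> Y \<in> carrier_mat D D \<Longrightarrow> mps_inner p A n X Y = Bf D (transfer_matrix D p A ^\<^sub>m n) X Y"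
proof (induct n arbitrary: X Y)
  case 0
  have "mps_inner p A 0 X Y = cnj (mtrace X) * mtrace Y"
    unfolding mps_inner_def words_0 by (simp add: mps_coeff_def)
  then show ?case using Bf_one[OF 0] E_carrier[of D p A] by simp
next
  case (Suc n)
  have "mps_inner p A (Suc n) X Y = (\<Sum>i<p. mps_inner p A n (A i * X) (A i * Y))" by (rule inner_Suc)
  also have "\<dots> = (\<Sum>i<p. Bf D (transfer_matrix D p A ^\<^sub>m n) (A i * X) (A i * Y))"
    using Suc A by (intro sum.cong refl) (auto intro!: Suc.hyps)
  also have "\<dots> = Bf D (transfer_matrix D p A ^\<^sub>m Suc n) X Y"
    using Bf_step[OF A Suc.prems, of "transfer_matrix D p A ^\<^sub>m n"] E_carrier[of D p A] by simp
  finally show ?case .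
qed


lemma Bf_minus: assumes "M1 \<in> carrier_mat (D*D) (D*D)" "M2 \<in> carrier_mat (D*D) (D*D)"
  shows "Bf D (M1 - M2) X Y = Bf D M1 X Y - Bf D M2 X Y"
  unfolding Bf_def using assms by (simp add: sum_subtractf left_diff_distrib)

lemma kron_entry: assumes X: "X \<in> carrier_mat D D" and Y: "Y \<in> carrier_mat D D" and k: "k < D*D" and j: "j < D*D"
  shows "kron (mconj X) Y $$ (k,j) = cnj (X $$ (k div D, j div D)) * Y $$ (k mod D, j mod D)"
  "kron (mconj X) Y \<in> carrier_mat (D*D) (D*D)"
  using X Y k j divmod_lt[OF k] divmod_lt[OF j] unfolding kron_def mconj_def by auto

lemma Bf_P: assumes X: "X \<in> carrier_mat D D" and Y: "Y \<in> carrier_mat D D" and L: "L \<in> carrier_mat D D"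
  shows "Bf D (projP D L) X Y = braket (vectorize L) (kron (mconj X) Y *\<^sub>v vectorize (1\<^sub>m D))"
proof -
  have KC: "kron (mconj X) Y \<in> carrier_mat (D*D) (D*D)" using X Y unfolding kron_def mconj_def by auto
  have "braket (vectorize L) (kron (mconj X) Y *\<^sub>v vectorize (1\<^sub>m D))
      = (\<Sum>k<D*D. cnj (vectorize L $ k) * (\<Sum>j<D*D. kron (mconj X) Y $$ (k,j) * vectorize (1\<^sub>m D) $ j))"
    unfolding braket_def using L by (auto intro!: sum.cong simp: mat_vec_entry[OF KC])
  also have "\<dots> = (\<Sum>k<D*D. \<Sum>j<D*D. vectorize (1\<^sub>m D) $ j * cnj (vectorize L $ k) * gxy D X Y j k)"
    by (auto intro!: sum.cong simp: kron_entry[OF X Y] gxy_def sum_distrib_left mult_ac)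
  also have "\<dots> = (\<Sum>j<D*D. \<Sum>k<D*D. vectorize (1\<^sub>m D) $ j * cnj (vectorize L $ k) * gxy D X Y j k)"
    by (rule sum.swap)
  also have "\<dots> = Bf D (projP D L) X Y"
    unfolding Bf_def by (auto intro!: sum.cong simp: P_entry)
  finally show ?thesis by simp
qed

lemma entry_le_frob: assumes X: "X \<in> carrier_mat D D" and i: "i < D" and j: "j < D"
  shows "cmod (X $$ (i,j)) \<le> frob_norm X"
proof -
  have "(cmod (X $$ (i,j)))\<^sup>2 \<le> (\<Sum>j'<D. (cmod (X $$ (i,j')))\<^sup>2)"
    using j by (intro member_le_sum) auto
  also have "\<dots> \<le> (\<Sum>i'<D. \<Sum>j'<D. (cmod (X $$ (i',j')))\<^sup>2)"
    using i by (intro member_le_sum[of i "{..<D}" "\<lambda>i'. \<Sum>j'<D. (cmod (X $$ (i',j')))\<^sup>2"]) (auto intro: sum_nonneg)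
  finally have "sqrt ((cmod (X $$ (i,j)))\<^sup>2) \<le> frob_norm X"
    unfolding frob_norm_def using X by (intro real_sqrt_le_mono) simp
  then show ?thesis by simp
qed

lemma frob_nonneg: "0 \<le> frob_norm X"
  unfolding frob_norm_def by (intro real_sqrt_ge_zero sum_nonneg) auto

lemma Bf_bound: assumes X: "X \<in> carrier_mat D D" and Y: "Y \<in> carrier_mat D D"
  and M: "M \<in> carrier_mat (D*D) (D*D)" and nb: "norm_bound M eps"
  shows "cmod (Bf D M X Y) \<le> real (D*D) * real (D*D) * (eps * (frob_norm X * frob_norm Y))"
proof -
  have each: "cmod (M $$ (r,s) * gxy D X Y r s) \<le> eps * (frob_norm X * frob_norm Y)" if r: "r < D*D" and s: "s < D*D" for r s
  proof -
    note rr = divmod_lt[OF r] and ss = divmod_lt[OF s]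
    have m: "cmod (M $$ (r,s)) \<le> eps" using nb M r s unfolding norm_bound_def by auto
    have g: "cmod (gxy D X Y r s) \<le> frob_norm X * frob_norm Y"
      unfolding gxy_def norm_mult complex_mod_cnj
      by (intro mult_mono entry_le_frob[OF X] entry_le_frob[OF Y] rr ss) (auto simp: frob_nonneg)
    have "cmod (M $$ (r,s) * gxy D X Y r s) = cmod (M $$ (r,s)) * cmod (gxy D X Y r s)" by (simp add: norm_mult)
    also have "\<dots> \<le> eps * (frob_norm X * frob_norm Y)"
      using m g order_trans[OF norm_ge_zero m] by (intro mult_mono) (auto simp: frob_nonneg)
    finally show ?thesis .
  qed
  have "cmod (Bf D M X Y) \<le> (\<Sum>r<D*D. cmod (\<Sum>s<D*D. M $$ (r,s) * gxy D X Y r s))"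
    unfolding Bf_def by (rule norm_sum)
  also have "\<dots> \<le> (\<Sum>r<D*D. \<Sum>s<D*D. cmod (M $$ (r,s) * gxy D X Y r s))"
    by (intro sum_mono norm_sum)
  also have "\<dots> \<le> (\<Sum>r<D*D. \<Sum>s<D*D. eps * (frob_norm X * frob_norm Y))"
    by (intro sum_mono each) auto
  also have "\<dots> = real (D*D) * real (D*D) * (eps * (frob_norm X * frob_norm Y))" by simp
  finally show ?thesis .
qed


lemma Bf_P_diag: assumes X: "X \<in> carrier_mat D D" and L: "L \<in> carrier_mat D D" and dg: "diagonal_mat L"
  shows "Bf D (projP D L) X X = (\<Sum>a<D. \<Sum>d<D. cnj (L $$ (d,d)) * complex_of_real ((cmod (X $$ (d,a)))\<^sup>2))"
proof -
  have Ld: "L $$ (c,d) = 0" if "c < D" "d < D" "c \<noteq> d" for c d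
    using dg L that unfolding diagonal_mat_def by auto
  have trm: "projP D L $$ (a*D+b, d*D+c) * gxy D X X (a*D+b) (d*D+c) = (if b = a then (if c = d then cnj (L $$ (d,d)) * (cnj (X $$ (d,a)) * X $$ (d,a))  else 0) else 0)"
    if "a < D" "b < D" "c < D" "d < D" for a b c d
  proof -
    have "projP D L $$ (a*D+b, d*D+c) * gxy D X X (a*D+b) (d*D+c) = (if b = a then 1 else 0) * cnj (L $$ (c,d)) * (cnj (X $$ (d,a)) * X $$ (c,b))"
      using that L by (simp add: P_entry lt_DD vec_entry[OF one_carrier_mat] vec_entry[OF L] divmod_simps gxy_def)
    then show ?thesis using that Ld[of c d] by auto
  qed
  have "Bf D (projP D L) X X = (\<Sum>a<D. \<Sum>b<D. \<Sum>s<D*D. projP D L $$ (a*D+b, s) * gxy D X X (a*D+b) s)"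
    unfolding Bf_def by (rule sum_split)
  also have "\<dots> = (\<Sum>a<D. \<Sum>b<D. \<Sum>d<D. \<Sum>c<D. projP D L $$ (a*D+b, d*D+c) * gxy D X X (a*D+b) (d*D+c))"
    by (intro sum.cong refl sum_split)
  also have "\<dots> = (\<Sum>a<D. \<Sum>d<D. cnj (L $$ (d,d)) * (cnj (X $$ (d,a)) * X $$ (d,a)))"
  proof (rule sum.cong[OF refl])
    fix a assume a: "a \<in> {..<D}"
    let ?t = "\<lambda>d. cnj (L $$ (d,d)) * (cnj (X $$ (d,a)) * X $$ (d,a))"
    have inner: "(\<Sum>d<D. \<Sum>c<D. projP D L $$ (a*D+b, d*D+c) * gxy D X X (a*D+b) (d*D+c)) = (if b = a then (\<Sum>d<D. ?t d) else 0)"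
      if b: "b < D" for b
    proof (cases "b = a")
      case True
      have "(\<Sum>d<D. \<Sum>c<D. projP D L $$ (a*D+b, d*D+c) * gxy D X X (a*D+b) (d*D+c)) = (\<Sum>d<D. \<Sum>c<D. if c = d then ?t d else 0)"
        using a b True by (intro sum.cong refl) (simp add: trm)
      also have "\<dots> = (\<Sum>d<D. ?t d)" by simp
      finally show ?thesis using True by simp
    next
      case False
      have "(\<Sum>d<D. \<Sum>c<D. projP D L $$ (a*D+b, d*D+c) * gxy D X X (a*D+b) (d*D+c)) = (\<Sum>d<D. \<Sum>c<D. 0)"
        using a b False by (intro sum.cong refl) (simp add: trm)
      then show ?thesis using False by simp
    qed
    show "(\<Sum>b<D. \<Sum>d<D. \<Sum>c<D. projP D L $$ (a*D+b, d*D+c) * gxy D X X (a*D+b) (d*D+c)) = (\<Sum>d<D. ?t d)"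
    proof -
      have "(\<Sum>b<D. \<Sum>d<D. \<Sum>c<D. projP D L $$ (a*D+b, d*D+c) * gxy D X X (a*D+b) (d*D+c)) = (\<Sum>b<D. if b = a then (\<Sum>d<D. ?t d) else 0)"
        by (intro sum.cong refl inner) simp
      also have "\<dots> = (\<Sum>d<D. ?t d)" using a by simp
      finally show ?thesis .
    qed
  qed
  also have "\<dots> = (\<Sum>a<D. \<Sum>d<D. cnj (L $$ (d,d)) * complex_of_real ((cmod (X $$ (d,a)))\<^sup>2))"
    by (intro sum.cong refl) (subst complex_norm_square, simp add: mult.commute)
  finally show ?thesis .
qed

lemma frob_sq: assumes X: "X \<in> carrier_mat D D"
  shows "(frob_norm X)\<^sup>2 = (\<Sum>a<D. \<Sum>d<D. (cmod (X $$ (d,a)))\<^sup>2)"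
proof -
  have "(frob_norm X)\<^sup>2 = (\<Sum>d<D. \<Sum>a<D. (cmod (X $$ (d,a)))\<^sup>2)"
    unfolding frob_norm_def using X by (simp add: sum_nonneg)
  also have "\<dots> = (\<Sum>a<D. \<Sum>d<D. (cmod (X $$ (d,a)))\<^sup>2)" by (rule sum.swap)
  finally show ?thesis .
qed

lemma Re_Bf_P: assumes X: "X \<in> carrier_mat D D" and L: "L \<in> carrier_mat D D" and dg: "diagonal_mat L"
  and lm: "\<And>d. d < D \<Longrightarrow> lm \<le> Re (L $$ (d,d))"
  shows "lm * (frob_norm X)\<^sup>2 \<le> Re (Bf D (projP D L) X X)"
proof -
  have "Re (Bf D (projP D L) X X) = (\<Sum>a<D. \<Sum>d<D. Re (L $$ (d,d)) * (cmod (X $$ (d,a)))\<^sup>2)"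
    unfolding Bf_P_diag[OF X L dg] by (simp add: Re_sum)
  also have "\<dots> \<ge> (\<Sum>a<D. \<Sum>d<D. lm * (cmod (X $$ (d,a)))\<^sup>2)"
    by (intro sum_mono mult_right_mono lm) auto
  finally show ?thesis unfolding frob_sq[OF X] by (simp add: sum_distrib_left)
qed

lemma diag_pos: assumes pd: "pos_def_mat D L" and d: "d < D"
  shows "Re (L $$ (d,d)) > 0"
proof -
  have L: "L \<in> carrier_mat D D" using pd unfolding pos_def_mat_def by auto
  have u: "unit_vec D d \<in> carrier_vec D" "unit_vec D d \<noteq> 0\<^sub>v D"
    using d by (auto simp: unit_vec_def vec_eq_iff)
  have "braket (unit_vec D d) (L *\<^sub>v unit_vec D d) = L $$ (d,d)"
    unfolding braket_def using L d by (simp add: sum.delta' if_distrib[of cnj] if_distrib[of "\<lambda>x. x * _"] cong: if_cong)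
  then show ?thesis using pd u unfolding pos_def_mat_def by auto
qed


lemma kernel_two: fixes K :: "complex mat"
  assumes K: "K \<in> carrier_mat m m" and u: "u \<in> mat_kernel K" and v: "v \<in> mat_kernel K"
  and v0: "v \<noteq> 0\<^sub>v m"
  and lu: "(\<Sum>i<m. l i * u $ i) = 1" and lv: "(\<Sum>i<m. l i * v $ i) = 0"
  shows "2 \<le> kernel_dim K"
proof -
  interpret kernel m m K by (unfold_locales, rule K)
  have uv: "u \<noteq> v" using lu lv by auto
  have vc: "v \<in> carrier_vec m" using v mat_kernel[OF K] by auto
  have li: "\<not> Ker.lin_dep {u,v}"
  proof
    assume "Ker.lin_dep {u,v}"
    then obtain B a w where B: "finite B" "B \<subseteq> {u,v}" and lc: "lincomb a B = 0\<^sub>v m"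
      and w: "w \<in> B" and aw: "a w \<noteq> 0"
      unfolding Ker.lin_dep_def by auto
    have Bk: "B \<subseteq> mat_kernel K" using B u v by auto
    have coord: "(\<Sum>x\<in>B. a x * x $ i) = 0" if "i < m" for i
      using lincomb_index[OF that Bk, of a] lc that by simp
    have phi: "(\<Sum>x\<in>B. a x * (\<Sum>i<m. l i * x $ i)) = 0"
    proof -
      have "(\<Sum>x\<in>B. a x * (\<Sum>i<m. l i * x $ i)) = (\<Sum>i<m. l i * (\<Sum>x\<in>B. a x * x $ i))"
        by (simp add: sum_distrib_left mult_ac sum.swap[of _ B])
      also have "\<dots> = 0" using coord by simp
      finally show ?thesis .
    qed
    have cases: "B = {} \<or> B = {u} \<or> B = {v} \<or> B = {u,v}" using B(2) by auto
    have au: "u \<in> B \<Longrightarrow> a u = 0" using phi cases lu lv uv by auto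
    have av: "v \<in> B \<Longrightarrow> a v = 0"
    proof -
      assume vB: "v \<in> B"
      have "a v * v $ i = 0" if i: "i < m" for i
      proof -
        have "(\<Sum>x\<in>B. a x * x $ i) = a v * v $ i" using cases vB au uv by auto
        then show ?thesis using coord[OF i] by simp
      qed
      moreover obtain i where "i < m" "v $ i \<noteq> 0" using v0 vc by (auto simp: vec_eq_iff)
      ultimately show "a v = 0" by auto
    qed
    show False using w aw au av B(2) by auto
  qed
  obtain Bs where Bs: "finite Bs" "basis Bs" using kernel_basis_exists[OF K] by auto
  have fd: "Ker.fin_dim" unfolding Ker.fin_dim_def using Bs unfolding Ker.basis_def by auto
  have "card {u,v} \<le> dim" by (rule Ker.li_le_dim(2)[OF fd _ li]) (use u v in auto)
  then show ?thesis using uv by simp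
qed


lemma list_min_le: fixes xs :: "(nat \<times> 'a) list" and k :: nat shows "(\<Sum> n \<leftarrow> map fst [(n, e)\<leftarrow>xs . e = a]. min k n) \<le> sum_list (map fst (filter (\<lambda>na. snd na = a) xs))"
  by (induct xs) auto

lemma charK: fixes E :: "complex mat" assumes EC: "E \<in> carrier_mat m m"
  shows "char_matrix E 1 ^\<^sub>m 1 = E - 1\<^sub>m m" "char_matrix E 1 ^\<^sub>m 1 \<in> carrier_mat m m"
proof -
  show "char_matrix E 1 ^\<^sub>m 1 = E - 1\<^sub>m m"
    using EC unfolding char_matrix_def by (intro eq_matI) auto
  then show "char_matrix E 1 ^\<^sub>m 1 \<in> carrier_mat m m" using EC unfolding carrier_mat_def by simp
qed

lemma fixed_in_kernel: fixes E :: "complex mat" assumes EC: "E \<in> carrier_mat m m"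
  and x: "x \<in> carrier_vec m" and Ex: "E *\<^sub>v x = x"
  shows "x \<in> mat_kernel (char_matrix E 1 ^\<^sub>m 1)"
proof (rule mat_kernelI[OF charK(2)[OF EC] x])
  have "(E - 1\<^sub>m m) *\<^sub>v x = E *\<^sub>v x - 1\<^sub>m m *\<^sub>v x"
    by (rule minus_mult_distrib_mat_vec[OF EC _ x]) simp
  also have "\<dots> = 0\<^sub>v m" using Ex x by (intro eq_vecI) auto
  finally show "char_matrix E 1 ^\<^sub>m 1 *\<^sub>v x = 0\<^sub>v m" using charK(1)[OF EC] by simp
qed

lemma F_eig:
  assumes A: "\<forall>i<p. A i \<in> carrier_mat D D"
    and fix1: "cp_map D p A (1\<^sub>m D) = 1\<^sub>m D"
    and L: "L \<in> carrier_mat D D" and fixL: "cp_dual D p A L = L" and tr: "mtrace L = 1"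
    and ord: "Polynomial.order 1 (char_poly (transfer_matrix D p A)) = 1"
    and D0: "D > 0"
    and ev: "eigenvector (transfer_matrix D p A - projP D L) v \<mu>" and mu: "\<mu> \<noteq> 0"
  shows "eigenvalue (transfer_matrix D p A) \<mu> \<and> \<mu> \<noteq> 1"
proof -
  let ?E = "transfer_matrix D p A" and ?P = "projP D L" and ?m = "D*D"
  have EC: "?E \<in> carrier_mat ?m ?m" by (rule E_carrier)
  have PC: "?P \<in> carrier_mat ?m ?m" by (rule P_carrier)
  have PE: "?P * ?E = ?P" by (rule PE[OF A L fixL])
  have PP: "?P * ?P = ?P" by (rule PP[OF L tr])
  from ev have v: "v \<in> carrier_vec ?m" and v0: "v \<noteq> 0\<^sub>v ?m" and Fv: "(?E - ?P) *\<^sub>v v = \<mu> \<cdot>\<^sub>v v"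
    unfolding eigenvector_def using EC PC by auto
  have PF: "?P * (?E - ?P) = 0\<^sub>m ?m ?m"
  proof -
    have "?P * (?E - ?P) = ?P * ?E - ?P * ?P" by (rule mult_minus_distrib_mat[OF PC EC PC])
    also have "\<dots> = 0\<^sub>m ?m ?m" using PE PP PC by simp
    finally show ?thesis .
  qed
  have "?P *\<^sub>v ((?E - ?P) *\<^sub>v v) = (?P * (?E - ?P)) *\<^sub>v v"
  proof -
    have FC: "?E - ?P \<in> carrier_mat ?m ?m" by (rule minus_carrier_mat[OF PC])
    show ?thesis by (rule assoc_mult_mat_vec[OF PC FC v, symmetric])
  qed
  also have "\<dots> = 0\<^sub>v ?m" using PF v by (intro eq_vecI) (auto simp: scalar_prod_def)
  finally have "?P *\<^sub>v (\<mu> \<cdot>\<^sub>v v) = 0\<^sub>v ?m" using Fv by simp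
  then have "\<mu> \<cdot>\<^sub>v (?P *\<^sub>v v) = 0\<^sub>v ?m" using mult_mat_vec[OF PC v] by simp
  then have Pv: "?P *\<^sub>v v = 0\<^sub>v ?m"
  proof -
    assume h: "\<mu> \<cdot>\<^sub>v (?P *\<^sub>v v) = 0\<^sub>v ?m"
    show ?thesis
    proof (rule eq_vecI)
      fix i assume "i < dim_vec (0\<^sub>v ?m :: complex vec)"
      then have i: "i < ?m" by simp
      have "\<mu> * (?P *\<^sub>v v) $ i = 0" using arg_cong[OF h, of "\<lambda>w. w $ i"] i PC by simp
      then show "(?P *\<^sub>v v) $ i = 0\<^sub>v ?m $ i" using mu i by simp
    qed (use PC in simp)
  qed
  have Eeq: "?E = (?E - ?P) + ?P" using EC PC by (intro eq_matI) auto
  have Ev: "?E *\<^sub>v v = \<mu> \<cdot>\<^sub>v v"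
  proof -
    have "?E *\<^sub>v v = ((?E - ?P) + ?P) *\<^sub>v v" using Eeq by simp
    also have "\<dots> = (?E - ?P) *\<^sub>v v + ?P *\<^sub>v v"
      by (rule add_mult_distrib_mat_vec[OF _ PC v]) (rule minus_carrier_mat[OF PC])
    also have "\<dots> = \<mu> \<cdot>\<^sub>v v" using Fv Pv v by simp
    finally show ?thesis .
  qed
  have eigE: "eigenvalue ?E \<mu>"
  proof -
    have "eigenvector ?E v \<mu>" unfolding eigenvector_def using v v0 Ev EC by (simp add: carrier_matD)
    then show ?thesis unfolding eigenvalue_def by blast
  qed
  have "\<mu> \<noteq> 1"
  proof
    assume mu1: "\<mu> = 1"
    let ?K = "char_matrix ?E 1 ^\<^sub>m 1"
    let ?u = "vectorize (1\<^sub>m D)"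
    have uc: "?u \<in> carrier_vec ?m" by (rule carrier_vecI) simp
    have Eu: "?E *\<^sub>v ?u = ?u" unfolding Evec[OF A one_carrier_mat] by (simp only: fix1)
    have uK: "?u \<in> mat_kernel ?K" by (rule fixed_in_kernel[OF EC uc Eu])
    have vK: "v \<in> mat_kernel ?K" by (rule fixed_in_kernel[OF EC v]) (use Ev mu1 v in simp)
    have lu: "(\<Sum>i<?m. cnj (vectorize L $ i) * ?u $ i) = 1" using trace_pair[OF L] tr by simp
    have z: "0 < ?m" using D0 by simp
    have u0: "?u $ 0 = 1" using D0 by (simp add: vec_entry[OF one_carrier_mat])
    have "(?P *\<^sub>v v) $ 0 = (\<Sum>k<?m. ?P $$ (0,k) * v $ k)"
      by (rule mat_vec_entry[OF PC]) (use v z in auto)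
    also have "\<dots> = ?u $ 0 * (\<Sum>k<?m. cnj (vectorize L $ k) * v $ k)"
      using z by (simp add: P_entry sum_distrib_left mult_ac)
    finally have lv: "(\<Sum>k<?m. cnj (vectorize L $ k) * v $ k) = 0" using Pv u0 z by simp
    have two: "2 \<le> kernel_dim ?K"
      by (rule kernel_two[OF charK(2)[OF EC] uK vK v0 lu lv])
    have one: "kernel_dim ?K \<le> 1"
    proof -
      obtain as where "char_poly ?E = (\<Prod>a\<leftarrow>as. [:- a, 1:])" using char_poly_factorized[OF EC] by auto
      from jordan_nf_exists[OF EC this] obtain n_as where jnf: "jordan_nf ?E n_as" by auto
      have "kernel_dim ?K = dim_gen_eigenspace ?E 1 1" unfolding dim_gen_eigenspace_def by simp
      also have "\<dots> \<le> Polynomial.order 1 (char_poly ?E)"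
        unfolding dim_gen_eigenspace[OF jnf] jordan_nf_order[OF jnf] by (rule list_min_le)
      also have "\<dots> = 1" by (rule ord)
      finally show ?thesis .
    qed
    from two one show False by linarith
  qed
  with eigE show ?thesis by simp
qed


lemma pow_smult: fixes A :: "complex mat" assumes A: "A \<in> carrier_mat n n"
  shows "(a \<cdot>\<^sub>m A) ^\<^sub>m k = a ^ k \<cdot>\<^sub>m (A ^\<^sub>m k)"
proof (induct k)
  case 0 then show ?case using A by (intro eq_matI) auto
next
  case (Suc k)
  have Ak: "A ^\<^sub>m k \<in> carrier_mat n n" using A by simp
  have "(a \<cdot>\<^sub>m A) ^\<^sub>m Suc k = (a ^ k \<cdot>\<^sub>m (A ^\<^sub>m k)) * (a \<cdot>\<^sub>m A)" using Suc by simp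
  also have "\<dots> = a ^ k \<cdot>\<^sub>m ((A ^\<^sub>m k) * (a \<cdot>\<^sub>m A))"
    by (rule mult_smult_assoc_mat[OF Ak smult_carrier_mat[OF A]])
  also have "(A ^\<^sub>m k) * (a \<cdot>\<^sub>m A) = a \<cdot>\<^sub>m ((A ^\<^sub>m k) * A)"
    by (rule mult_smult_distrib[OF Ak A])
  finally show ?case using A by (intro eq_matI) (auto simp: mult_ac)
qed

lemma smult_mat_vec: fixes A :: "complex mat" assumes A: "A \<in> carrier_mat n n" and w: "w \<in> carrier_vec n"
  shows "(a \<cdot>\<^sub>m A) *\<^sub>v w = a \<cdot>\<^sub>v (A *\<^sub>v w)"
  using A w by (intro eq_vecI) (auto simp: scalar_prod_def sum_distrib_left mult_ac)

lemma scaled_bound: fixes F :: "complex mat"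
  assumes FC: "F \<in> carrier_mat m m" and m: "m > 0" and s0: "0 < s" and s1: "s < 1"
    and ev: "\<And>\<mu>. eigenvalue F \<mu> \<Longrightarrow> cmod \<mu> \<le> s * s"
  shows "\<exists>c. \<forall>k. norm_bound (F ^\<^sub>m k) (c * s ^ k)"
proof -
  define G where "G = complex_of_real (1/s) \<cdot>\<^sub>m F"
  have GC: "G \<in> carrier_mat m m" unfolding G_def using FC by simp
  have FG: "F = complex_of_real s \<cdot>\<^sub>m G" unfolding G_def using FC s0 by (intro eq_matI) auto
  have "spectral_radius G \<in> norm ` spectrum G" by (rule spectral_radius_mem_max(1)[OF GC m])
  then obtain \<nu> where nu: "eigenvalue G \<nu>" and sr: "spectral_radius G = cmod \<nu>"
    unfolding spectrum_def by auto
  from nu obtain w where w: "eigenvector G w \<nu>" unfolding eigenvalue_def by auto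
  then have wc: "w \<in> carrier_vec m" and w0: "w \<noteq> 0\<^sub>v m" and Gw: "G *\<^sub>v w = \<nu> \<cdot>\<^sub>v w"
    unfolding eigenvector_def using GC by auto
  have "F *\<^sub>v w = complex_of_real s \<cdot>\<^sub>v (G *\<^sub>v w)" unfolding FG by (rule smult_mat_vec[OF GC wc])
  also have "\<dots> = (complex_of_real s * \<nu>) \<cdot>\<^sub>v w" unfolding Gw by (simp add: smult_smult_assoc)
  finally have "eigenvector F w (complex_of_real s * \<nu>)" unfolding eigenvector_def using wc w0 FC by auto
  then have "eigenvalue F (complex_of_real s * \<nu>)" unfolding eigenvalue_def by auto
  from ev[OF this] have "s * cmod \<nu> \<le> s * s" using s0 by (simp add: norm_mult)
  then have "cmod \<nu> \<le> s" using s0 by simp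
  then have "spectral_radius G < 1" using sr s1 by simp
  from spectral_radius_jnf_norm_bound_less_1_upper_triangular[OF GC this]
  obtain c where c: "\<And>k. norm_bound (G ^\<^sub>m k) c" by auto
  have "norm_bound (F ^\<^sub>m k) (c * s ^ k)" for k
  proof
    fix i j assume i: "i < dim_row (F ^\<^sub>m k)" and j: "j < dim_col (F ^\<^sub>m k)"
    have Fk: "F ^\<^sub>m k = complex_of_real s ^ k \<cdot>\<^sub>m (G ^\<^sub>m k)" unfolding FG by (rule pow_smult[OF GC])
    have FkC: "F ^\<^sub>m k \<in> carrier_mat m m" using FC by simp
    have ij: "i < m" "j < m" using i j FkC by auto
    have "norm ((F ^\<^sub>m k) $$ (i,j)) = s ^ k * norm ((G ^\<^sub>m k) $$ (i,j))"
      unfolding Fk using ij GC s0 by (simp add: norm_mult norm_power)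
    also have "\<dots> \<le> s ^ k * c"
      using c[of k] ij GC s0 unfolding norm_bound_def by (intro mult_left_mono) auto
    finally show "norm ((F ^\<^sub>m k) $$ (i,j)) \<le> c * s ^ k" by (simp add: mult.commute)
  qed
  then show ?thesis by blast
qed

lemma nilpotent_bound: fixes F :: "complex mat"
  assumes FC: "F \<in> carrier_mat m m"
    and ev: "\<And>\<mu>. eigenvalue F \<mu> \<Longrightarrow> \<mu> = 0" and k: "k \<ge> m"
  shows "norm_bound (F ^\<^sub>m k) 0"
proof -
  obtain as where "char_poly F = (\<Prod>a\<leftarrow>as. [:- a, 1:])" using char_poly_factorized[OF FC] by auto
  from jordan_nf_exists[OF FC this] obtain n_as where jnf: "jordan_nf F n_as" by auto
  from jordan_nf_powE[OF FC jnf] obtain Pm Qm where Pm: "Pm \<in> carrier_mat m m" and Qm: "Qm \<in> carrier_mat m m"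
    and pow: "\<And>k. F ^\<^sub>m k = Pm * (jordan_matrix n_as) ^\<^sub>m k * Qm" by metis
  have cp0: "char_poly F \<noteq> 0" using degree_monic_char_poly[OF FC] by auto
  have blocks: "a = 0 \<and> n \<le> m" if na: "(n,a) \<in> set n_as" for n a
  proof -
    have n0: "n > 0" using jnf na unfolding jordan_nf_def by force
    have ord: "n \<le> Polynomial.order a (char_poly F)" by (rule jordan_nf_block_size_order_bound[OF jnf na])
    have "poly (char_poly F) a = 0" using ord n0 order_root[of "char_poly F" a] by auto
    then have "eigenvalue F a" using eigenvalue_root_char_poly[OF FC] by simp
    then have "a = 0" by (rule ev)
    moreover have "n \<le> m" using ord order_degree[OF cp0, of a] degree_monic_char_poly[OF FC] by simp
    ultimately show ?thesis by simp
  qed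
  let ?J = "jordan_matrix n_as ^\<^sub>m k"
  have Jm: "jordan_matrix n_as \<in> carrier_mat m m"
  proof -
    from jnf have sim: "similar_mat F (jordan_matrix n_as)" unfolding jordan_nf_def by auto
    from similar_matD[OF sim] obtain n P Q where sub: "{F, jordan_matrix n_as, P, Q} \<subseteq> carrier_mat n n" by blast
    then have "F \<in> carrier_mat n n" "jordan_matrix n_as \<in> carrier_mat n n" by blast+
    with FC show ?thesis unfolding carrier_mat_def by simp
  qed
  have "\<forall>e \<in> elements_mat ?J. norm e \<le> 0"
  proof
    fix e assume e: "e \<in> elements_mat ?J"
    have "?J = diag_block_mat (map (\<lambda>(n,a). jordan_block n a ^\<^sub>m k) n_as)" by (rule jordan_matrix_pow)
    then have eJ: "e \<in> elements_mat (diag_block_mat (map (\<lambda>(n,a). jordan_block n a ^\<^sub>m k) n_as))" using e by simp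
    have "e \<in> {0} \<union> \<Union> (set (map elements_mat (map (\<lambda>(n,a). jordan_block n a ^\<^sub>m k) n_as)))"
      by (rule subsetD[OF elements_diag_block_mat eJ])
    moreover have "e = 0" if "e \<in> elements_mat (jordan_block n a ^\<^sub>m k)" "(n,a) \<in> set n_as" for n a
    proof -
      have a: "a = 0" and nm: "n \<le> m" using blocks[OF that(2)] by auto
      from elements_matD[OF that(1)] obtain i j where ij0: "i < dim_row (jordan_block n a ^\<^sub>m k)"
        "j < dim_col (jordan_block n a ^\<^sub>m k)" and ee: "e = (jordan_block n a ^\<^sub>m k) $$ (i,j)"
        by blast
      have ij: "i < n" "j < n" using ij0 by (simp_all only: jordan_block_pow_dim)
      show "e = 0" unfolding ee a jordan_block_zero_pow using ij nm k by auto
    qed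
    ultimately show "norm e \<le> 0" by force
  qed
  then have nJ: "norm_bound ?J 0" by (rule norm_bound_bridge)
  obtain bP where bP: "norm_bound Pm bP" using norm_bound_max[of Pm] by auto
  obtain bQ where bQ: "norm_bound Qm bQ" using norm_bound_max[of Qm] by auto
  have JC: "?J \<in> carrier_mat m m" using Jm by simp
  have "norm_bound (Pm * ?J) (bP * 0 * of_nat m)" by (rule norm_bound_mult[OF Pm JC bP nJ])
  then have PJ: "norm_bound (Pm * ?J) 0" by simp
  have "norm_bound (Pm * ?J * Qm) (0 * bQ * of_nat m)"
    by (rule norm_bound_mult[OF mult_carrier_mat[OF Pm JC] Qm PJ bQ])
  then show ?thesis using pow[of k] by simp
qed


lemma powr_half: fixes x :: real assumes x: "0 \<le> x" and n: "n \<ge> 1"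
  shows "x powr (real n / 2) = sqrt x ^ n"
proof (cases "x = 0")
  case True then show ?thesis using n by (simp add: power_0_left)
next
  case False
  then have xp: "x > 0" using x by simp
  have "sqrt x ^ n = (x powr (1/2)) ^ n" using x by (simp add: powr_half_sqrt)
  also have "\<dots> = (x powr (1/2)) powr (real n)" using xp by (simp add: powr_realpow)
  also have "\<dots> = x powr (real n / 2)" by (simp add: powr_powr)
  finally show ?thesis by simp
qed

lemma inner_conj: "mps_inner p A n Y X = cnj (mps_inner p A n X Y)"
  unfolding mps_inner_def by (simp add: mult.commute)

lemma lambda2_props: fixes E :: "complex mat"
  assumes EC: "E \<in> carrier_mat m m" and m: "m > 0" and sr: "spectral_radius E = 1"
    and eig1: "\<forall>\<mu>. eigenvalue E \<mu> \<and> cmod \<mu> = 1 \<longrightarrow> \<mu> = 1"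
  shows "\<And>\<mu>. eigenvalue E \<mu> \<Longrightarrow> \<mu> \<noteq> 1 \<Longrightarrow> cmod \<mu> \<le> lambda2 E"
    and "0 \<le> lambda2 E" and "lambda2 E < 1"
proof -
  let ?S = "insert 0 (cmod ` {\<mu>. eigenvalue E \<mu> \<and> \<mu> \<noteq> 1})"
  have sub: "{\<mu>. eigenvalue E \<mu> \<and> \<mu> \<noteq> 1} \<subseteq> spectrum E" unfolding spectrum_def by auto
  have fin: "finite ?S" using finite_subset[OF sub card_finite_spectrum(1)[OF EC]] by simp
  have bdd: "bdd_above ?S" using fin by (rule bdd_above_finite)
  show "cmod \<mu> \<le> lambda2 E" if "eigenvalue E \<mu>" "\<mu> \<noteq> 1" for \<mu>
    unfolding lambda2_def by (rule cSup_upper[OF _ bdd]) (use that in auto)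
  show "0 \<le> lambda2 E" unfolding lambda2_def by (rule cSup_upper[OF _ bdd]) auto
  have "Max ?S < 1"
  proof (subst Max_less_iff[OF fin], simp, intro ballI)
    fix a assume "a \<in> ?S"
    then consider "a = 0" | \<mu> where "eigenvalue E \<mu>" "\<mu> \<noteq> 1" "a = cmod \<mu>" by auto
    then show "a < 1"
    proof cases
      case 1 then show ?thesis by simp
    next
      case 2
      have "cmod \<mu> \<in> norm ` spectrum E" using 2 unfolding spectrum_def by auto
      from spectral_radius_mem_max(2)[OF EC m this] sr have "cmod \<mu> \<le> 1" by simp
      moreover have "cmod \<mu> \<noteq> 1" using eig1 2 by auto
      ultimately show ?thesis using 2 by simp
    qed
  qed
  then show "lambda2 E < 1" unfolding lambda2_def using cSup_eq_Max[OF fin] by simp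
qed


theorem lemma7:
  fixes D p :: nat and A :: "nat \<Rightarrow> complex mat" and Lam :: "complex mat"
  assumes "\<forall>i<p. A i \<in> carrier_mat D D"
    and "injective_mps D p A"
    and "canonical_form D p A Lam"
  shows "\<exists>C N. \<forall>n\<ge>N. \<forall>X Y.
           X \<in> carrier_mat D D \<and> Y \<in> carrier_mat D D \<and>
           mps_inner p A n X X = 1 \<and> mps_inner p A n Y Y = 1 \<and> mps_inner p A n X Y = 0 \<longrightarrow>
           frob_norm X \<le> C \<and> frob_norm Y \<le> C \<and>
           cmod (braket (vectorize Lam) (kron (mconj X) Y *\<^sub>v vectorize (1\<^sub>m D)))
             \<le> C * lambda2 (transfer_matrix D p A) powr (real n / 2) \<and>
           cmod (braket (vectorize Lam) (kron (mconj Y) X *\<^sub>v vectorize (1\<^sub>m D)))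
             \<le> C * lambda2 (transfer_matrix D p A) powr (real n / 2)"
proof -
  note A = assms(1)
  let ?E = "transfer_matrix D p A" and ?P = "projP D Lam" and ?m = "D*D"
  let ?F = "?E - ?P"
  let ?l2 = "lambda2 ?E"
  from assms(2) have sr: "spectral_radius ?E = 1"
    and eig1: "\<forall>\<mu>. eigenvalue ?E \<mu> \<and> cmod \<mu> = 1 \<longrightarrow> \<mu> = 1"
    and ord: "Polynomial.order 1 (char_poly ?E) = 1"
    unfolding injective_mps_def Let_def by auto
  from assms(3) have fix1: "cp_map D p A (1\<^sub>m D) = 1\<^sub>m D" and L: "Lam \<in> carrier_mat D D"
    and dg: "diagonal_mat Lam" and pd: "pos_def_mat D Lam" and tr: "mtrace Lam = 1"
    and fixL: "cp_dual D p A Lam = Lam"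
    unfolding canonical_form_def by auto
  have D0: "D > 0"
  proof (rule ccontr)
    assume "\<not> D > 0" then have "D = 0" by simp
    then have "mtrace Lam = 0" using L by (simp add: mtrace_def)
    then show False using tr by simp
  qed
  have m0: "?m > 0" using D0 by simp
  have EC: "?E \<in> carrier_mat ?m ?m" by (rule E_carrier)
  have PC: "?P \<in> carrier_mat ?m ?m" by (rule P_carrier)
  have FC: "?F \<in> carrier_mat ?m ?m" by (rule minus_carrier_mat[OF PC])
  note l2 = lambda2_props[OF EC m0 sr eig1]
  define t where "t = sqrt ?l2"
  have t0: "0 \<le> t" and t1: "t < 1" using l2(2,3) unfolding t_def by auto
  have tt: "t * t = ?l2" using l2(2) unfolding t_def by simp
  have pw: "?l2 powr (real n / 2) = t ^ n" if "n \<ge> 1" for n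
    unfolding t_def by (rule powr_half[OF l2(2) that])
  have Feig: "cmod \<mu> \<le> t * t" if "eigenvalue ?F \<mu>" for \<mu>
  proof (cases "\<mu> = 0")
    case True then show ?thesis using t0 by simp
  next
    case False
    from that obtain v where "eigenvector ?F v \<mu>" unfolding eigenvalue_def by auto
    from F_eig[OF A fix1 L fixL tr ord D0 this False] have "eigenvalue ?E \<mu>" "\<mu> \<noteq> 1" by auto
    from l2(1)[OF this] show ?thesis using tt by simp
  qed
  have "\<exists>c N0. c \<ge> 0 \<and> N0 \<ge> 1 \<and> (\<forall>n\<ge>N0. norm_bound (?F ^\<^sub>m n) (c * t ^ n))"
  proof (cases "t = 0")
    case True
    have "\<forall>n\<ge>max ?m 1. norm_bound (?F ^\<^sub>m n) (0 * t ^ n)"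
    proof (intro allI impI)
      fix n assume n: "n \<ge> max ?m 1"
      have "norm_bound (?F ^\<^sub>m n) 0"
        by (rule nilpotent_bound[OF FC _ ]) (use Feig True n in auto)
      then show "norm_bound (?F ^\<^sub>m n) (0 * t ^ n)" by simp
    qed
    then show ?thesis by (intro exI[of _ 0] exI[of _ "max ?m 1"]) auto
  next
    case False
    then have tp: "t > 0" using t0 by simp
    from scaled_bound[OF FC m0 tp t1 Feig] obtain c where c: "\<And>k. norm_bound (?F ^\<^sub>m k) (c * t ^ k)" by auto
    have "norm_bound (?F ^\<^sub>m n) (max c 0 * t ^ n)" for n
      using c[of n] t0 unfolding norm_bound_def
      by (meson max.cobounded1 mult_right_mono order_trans zero_le_power)
    then show ?thesis by (intro exI[of _ "max c 0"] exI[of _ 1]) auto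
  qed
  then obtain c N0 where c0: "c \<ge> 0" and N01: "N0 \<ge> 1"
    and cb: "\<And>n. n \<ge> N0 \<Longrightarrow> norm_bound (?F ^\<^sub>m n) (c * t ^ n)" by auto
  define q where "q = real ?m * real ?m"
  have q0: "q \<ge> 0" unfolding q_def by simp
  define lm where "lm = Min ((\<lambda>d. Re (Lam $$ (d,d))) ` {..<D})"
  have lm_le: "lm \<le> Re (Lam $$ (d,d))" if "d < D" for d
    unfolding lm_def using that by (intro Min_le) auto
  have lm0: "lm > 0"
    unfolding lm_def using D0 diag_pos[OF pd] by (subst Min_gr_iff) auto
  have "((\<lambda>n. q * c * t ^ n) \<longlonglongrightarrow> q * c * 0)"
    by (intro tendsto_mult_left LIMSEQ_power_zero) (use t0 t1 in simp)
  then have "eventually (\<lambda>n. q * c * t ^ n < lm / 2) sequentially"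
    using lm0 by (intro order_tendstoD(2)) auto
  then obtain N1 where N1: "\<And>n. n \<ge> N1 \<Longrightarrow> q * c * t ^ n < lm / 2"
    unfolding eventually_sequentially by auto
  define Ck where "Ck = sqrt (2 / lm)"
  define C where "C = max Ck (q * c * Ck * Ck)"
  define N where "N = max N0 N1"
  show ?thesis
  proof (intro exI[of _ C] exI[of _ N] allI impI)
    fix n X Y
    assume n: "n \<ge> N"
    assume h: "X \<in> carrier_mat D D \<and> Y \<in> carrier_mat D D \<and>
           mps_inner p A n X X = 1 \<and> mps_inner p A n Y Y = 1 \<and> mps_inner p A n X Y = 0"
    then have X: "X \<in> carrier_mat D D" and Y: "Y \<in> carrier_mat D D"
      and nX: "mps_inner p A n X X = 1" and nY: "mps_inner p A n Y Y = 1"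
      and oXY: "mps_inner p A n X Y = 0" by auto
    have oYX: "mps_inner p A n Y X = 0" using oXY inner_conj[of p A n Y X] by simp
    have n1: "n \<ge> 1" and nN0: "n \<ge> N0" and nN1: "n \<ge> N1" using n N01 unfolding N_def by auto
    have Fn: "?F ^\<^sub>m n = ?E ^\<^sub>m n - ?P"
      by (rule Fpow[OF EC PC EP[OF A fix1] PE[OF A L fixL] PP[OF L tr] n1])
    have FnC: "?F ^\<^sub>m n \<in> carrier_mat ?m ?m" using FC by simp
    have EnC: "?E ^\<^sub>m n \<in> carrier_mat ?m ?m" using EC by simp
    have decomp: "mps_inner p A n U V = Bf D ?P U V + Bf D (?F ^\<^sub>m n) U V"
      if U: "U \<in> carrier_mat D D" and V: "V \<in> carrier_mat D D" for U V
      unfolding Fn Bf_minus[OF EnC PC] inner_Bf[OF A U V] by simp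
    have err: "cmod (Bf D (?F ^\<^sub>m n) U V) \<le> q * (c * t ^ n) * (frob_norm U * frob_norm V)"
      if U: "U \<in> carrier_mat D D" and V: "V \<in> carrier_mat D D" for U V
      using Bf_bound[OF U V FnC cb[OF nN0]] unfolding q_def by (simp add: mult_ac)
    have small: "q * (c * t ^ n) \<le> lm / 2" using N1[OF nN1] by (simp add: mult_ac)
    have frob_bd: "frob_norm U \<le> Ck" if U: "U \<in> carrier_mat D D" and nU: "mps_inner p A n U U = 1" for U
    proof -
      let ?a = "(frob_norm U)\<^sup>2"
      have a0: "?a \<ge> 0" by simp
      have "1 = Re (Bf D ?P U U) + Re (Bf D (?F ^\<^sub>m n) U U)"
      proof -
        have "Re (mps_inner p A n U U) = Re (Bf D ?P U U + Bf D (?F ^\<^sub>m n) U U)"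
          using decomp[OF U U] by simp
        then show ?thesis using nU by simp
      qed
      moreover have "lm * ?a \<le> Re (Bf D ?P U U)" by (rule Re_Bf_P[OF U L dg lm_le])
      moreover have "- Re (Bf D (?F ^\<^sub>m n) U U) \<le> lm / 2 * ?a"
      proof -
        have "- Re (Bf D (?F ^\<^sub>m n) U U) \<le> cmod (Bf D (?F ^\<^sub>m n) U U)"
          using abs_Re_le_cmod[of "Bf D (?F ^\<^sub>m n) U U"] by linarith
        also have "\<dots> \<le> q * (c * t ^ n) * (frob_norm U * frob_norm U)" by (rule err[OF U U])
        also have "\<dots> \<le> lm / 2 * ?a"
        proof -
          have "q * (c * t ^ n) * (frob_norm U * frob_norm U) \<le> lm / 2 * (frob_norm U * frob_norm U)"
            by (rule mult_right_mono[OF small]) simp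
          then show ?thesis by (simp add: power2_eq_square)
        qed
        finally show ?thesis .
      qed
      ultimately have "lm / 2 * ?a \<le> 1" by linarith
      then have "?a \<le> 2 / lm" using lm0 by (simp add: field_simps)
      then have "sqrt ?a \<le> Ck" unfolding Ck_def by (rule real_sqrt_le_mono)
      then show ?thesis using frob_nonneg[of U] by simp
    qed
    have fX: "frob_norm X \<le> Ck" by (rule frob_bd[OF X nX])
    have fY: "frob_norm Y \<le> Ck" by (rule frob_bd[OF Y nY])
    have Ck0: "Ck \<ge> 0" unfolding Ck_def using lm0 by simp
    have ov: "cmod (braket (vectorize Lam) (kron (mconj U) V *\<^sub>v vectorize (1\<^sub>m D)))
      \<le> C * ?l2 powr (real n / 2)"
      if U: "U \<in> carrier_mat D D" and V: "V \<in> carrier_mat D D" and o: "mps_inner p A n U V = 0"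
      and fU: "frob_norm U \<le> Ck" and fV: "frob_norm V \<le> Ck" for U V
    proof -
      have "Bf D ?P U V = - Bf D (?F ^\<^sub>m n) U V" using decomp[OF U V] o by (simp add: add_eq_0_iff)
      then have "cmod (braket (vectorize Lam) (kron (mconj U) V *\<^sub>v vectorize (1\<^sub>m D)))
          = cmod (Bf D (?F ^\<^sub>m n) U V)" unfolding Bf_P[OF U V L, symmetric] by simp
      also have "\<dots> \<le> q * (c * t ^ n) * (frob_norm U * frob_norm V)" by (rule err[OF U V])
      also have "\<dots> \<le> q * (c * t ^ n) * (Ck * Ck)"
        using fU fV frob_nonneg[of U] frob_nonneg[of V] q0 c0 t0
        by (intro mult_left_mono mult_mono) auto
      also have "\<dots> = (q * c * Ck * Ck) * t ^ n" by (simp add: mult_ac)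
      also have "\<dots> \<le> C * t ^ n" unfolding C_def using t0 by (intro mult_right_mono) auto
      also have "\<dots> = C * ?l2 powr (real n / 2)" using pw[OF n1] by simp
      finally show ?thesis .
    qed
    have CCk: "Ck \<le> C" unfolding C_def by simp
    show "frob_norm X \<le> C \<and> frob_norm Y \<le> C \<and>
           cmod (braket (vectorize Lam) (kron (mconj X) Y *\<^sub>v vectorize (1\<^sub>m D)))
             \<le> C * ?l2 powr (real n / 2) \<and>
           cmod (braket (vectorize Lam) (kron (mconj Y) X *\<^sub>v vectorize (1\<^sub>m D)))
             \<le> C * ?l2 powr (real n / 2)"
      using fX fY CCk ov[OF X Y oXY fX fY] ov[OF Y X oYX fY fX] by auto
  qed
qed


end
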